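(* Let $k\in\mathbb{N}$, let $u=a_1\cdots a_n$ be a word over a finite alphabet $A$, and let $i<j$ be positions with $a_i=a_j$ and $a_\ell\neq a_i$ for all $\ell\in\{i+1,\dots,j-1\}$. Suppose the attributes satisfy $x_i+y_i\le k+1$ and $x_j\le k$. Then for every word $v$ with $u\sim_k v$, the positions $r^u_i(v)$ and $r^u_j(v)$ are defined and $r^u_i(v)<r^u_j(v)$.
   Context: $w\prec v$ ($w$ is a scattered subword of $v$) means $v=v_0b_1v_1\cdots b_mv_m$ where $w=b_1\cdots b_m$. $u\sim_k v$ iff $u,v$ have the same subwords of length at most $k$. An X-ranker is a nonempty word over $\{\mathsf X_a : a\in A\}$, a Y-ranker a nonempty word over $\{\mathsf Y_a:a\in A\}$, length = word length. For a word $w$: $\mathsf X_a(w)$ is the smallest $a$-position, $r\mathsf X_a(w)$ the smallest $a$-position greater than $r(w)$; $\mathsf Y_a(w)$ the greatest $a$-position, $r\mathsf Y_a(w)$ the greatest $a$-position smaller than $r(w)$ (possibly undefined). The attribute of position $p$ of $u$ is $(x_p,y_p)$, $x_p$ (resp. $y_p$) the minimal length of an X-ranker (resp. Y-ranker) $r$ with $r(u)=p$. Canonical X-ranker $r^u_p$: let $R^u_p$ be the set of X-rankers of length $x_p$ reaching $p$ in $u$; set $S_{x_p}=R^u_p$ and for $t=x_p-1,\dots,1$ let $q_t$ be the minimal position of $u$ reached by length-$t$ prefixes of rankers in $S_{t+1}$ and $S_t$ the set of those rankers in $S_{t+1}$ whose length-$t$ prefix reaches $q_t$; then $S_1=\{r^u_p\}$.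 *)

theory Defs
  imports Main "HOL-Library.Sublist"
begin

text \<open>Words are lists; positions are 1-based: position p of w (1 \<le> p \<le> length w)
  carries the letter w ! (p - 1).\<close>

definition is_pos :: "'a list \<Rightarrow> 'a \<Rightarrow> nat \<Rightarrow> bool" where
  "is_pos w a p \<longleftrightarrow> 1 \<le> p \<and> p \<le> length w \<and> w ! (p - 1) = a"

definition next_pos :: "'a list \<Rightarrow> 'a \<Rightarrow> nat \<Rightarrow> nat option" where
  "next_pos w a q = (if \<exists>p. q < p \<and> is_pos w a p
      then Some (LEAST p. q < p \<and> is_pos w a p) else None)"

definition prev_pos :: "'a list \<Rightarrow> 'a \<Rightarrow> nat \<Rightarrow> nat option" where
  "prev_pos w a q = (if \<exists>p. p < q \<and> is_pos w a p
      then Some (GREATEST p. p < q \<and> is_pos w a p) else None)"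

text \<open>An X-ranker X_{b1}...X_{bm} is represented by the nonempty list [b1,...,bm];
  likewise a Y-ranker.\<close>
fun xev :: "'a list \<Rightarrow> nat \<Rightarrow> 'a list \<Rightarrow> nat option" where
  "xev w q [] = Some q"
| "xev w q (a # r) = (case next_pos w a q of None \<Rightarrow> None | Some p \<Rightarrow> xev w p r)"

fun yev :: "'a list \<Rightarrow> nat \<Rightarrow> 'a list \<Rightarrow> nat option" where
  "yev w q [] = Some q"
| "yev w q (a # r) = (case prev_pos w a q of None \<Rightarrow> None | Some p \<Rightarrow> yev w p r)"

text \<open>r(w) for an X-ranker r: X_a(w) is the smallest a-position (i.e. > 0).\<close>
definition xrank :: "'a list \<Rightarrow> 'a list \<Rightarrow> nat option" where
  "xrank w r = xev w 0 r"

text \<open>r(w) for a Y-ranker r: Y_a(w) is the greatest a-position (i.e. < length w + 1).\<close>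
definition yrank :: "'a list \<Rightarrow> 'a list \<Rightarrow> nat option" where
  "yrank w r = yev w (Suc (length w)) r"

definition xattr :: "'a list \<Rightarrow> nat \<Rightarrow> nat" where
  "xattr u p = (LEAST m. \<exists>r. r \<noteq> [] \<and> length r = m \<and> xrank u r = Some p)"

definition yattr :: "'a list \<Rightarrow> nat \<Rightarrow> nat" where
  "yattr u p = (LEAST m. \<exists>r. r \<noteq> [] \<and> length r = m \<and> yrank u r = Some p)"

text \<open>Canonical X-ranker r^u_p. canS u p d is S_t for t = x_p - d.\<close>
fun canS :: "'a list \<Rightarrow> nat \<Rightarrow> nat \<Rightarrow> 'a list set" where
  "canS u p 0 = {r. r \<noteq> [] \<and> length r = xattr u p \<and> xrank u r = Some p}"
| "canS u p (Suc d) =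
    (let t = xattr u p - Suc d;
         qt = Min {q. \<exists>r \<in> canS u p d. xrank u (take t r) = Some q}
     in {r \<in> canS u p d. xrank u (take t r) = Some qt})"

definition canon :: "'a list \<Rightarrow> nat \<Rightarrow> 'a list" where
  "canon u p = (THE r. r \<in> canS u p (xattr u p - 1))"

definition simk :: "nat \<Rightarrow> 'a list \<Rightarrow> 'a list \<Rightarrow> bool" where
  "simk k u v \<longleftrightarrow> (\<forall>w. length w \<le> k \<longrightarrow> (subseq w u \<longleftrightarrow> subseq w v))"

end

theory Submission
  imports Defs
begin


fun lend :: "'a list \<Rightarrow> 'a list \<Rightarrow> nat option" where
  "lend [] x = Some 0"
| "lend (a # r) [] = None"
| "lend (a # r) (b # x) = (if a = b then map_option Suc (lend r x) else map_option Suc (lend (a # r) x))"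

lemma lend_L1: "lend r x = Some n \<Longrightarrow> subseq r (take n x) \<and> n \<le> length x"
  by (induction r x arbitrary: n rule: lend.induct) (auto split: if_splits)

lemma lend_L2: "lend r x = Some n \<Longrightarrow> subseq r (take m x) \<Longrightarrow> n \<le> m"
proof (induction r x arbitrary: n m rule: lend.induct)
  case (3 a r b x)
  show ?case
  proof (cases m)
    case 0 then show ?thesis using 3 by simp
  next
    case (Suc m')
    then show ?thesis using 3 by (auto split: if_splits)
  qed
qed auto

lemma lend_L3: "subseq r x \<Longrightarrow> lend r x \<noteq> None"
  by (induction r x rule: lend.induct) (auto split: if_splits)

lemma lend_L4: "lend r x = Some n \<Longrightarrow> r \<noteq> [] \<Longrightarrow> 1 \<le> n \<and> x ! (n - 1) = last r"
proof (induction r x arbitrary: n rule: lend.induct)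
  case (3 a r b x)
  then show ?case
    by (cases r; cases "n"; auto split: if_splits)
qed auto

lemma plus_Suc_fun: "(+) (Suc n) = (\<lambda>x. Suc (n + x))" by auto
lemma map_option_plus0: "map_option ((+) (0::nat)) y = y" by (cases y) auto

lemma lend_append: "lend (r1 @ r2) x = (case lend r1 x of None \<Rightarrow> None | Some n \<Rightarrow> map_option ((+) n) (lend r2 (drop n x)))"
  by (induction r1 x rule: lend.induct) (auto split: option.splits simp: option.map_comp comp_def plus_Suc_fun map_option_plus0)

lemma lend_S: "lend [a] x = Some n \<Longrightarrow> 1 \<le> n \<and> n \<le> length x \<and> x ! (n - 1) = a \<and> (\<forall>m. 1 \<le> m \<longrightarrow> m < n \<longrightarrow> x ! (m - 1) \<noteq> a)"
proof (induction x arbitrary: n)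
  case (Cons b x)
  show ?case
  proof (cases "a = b")
    case True then show ?thesis using Cons by auto
  next
    case False
    then obtain n' where n: "n = Suc n'" "lend [a] x = Some n'" using Cons.prems by auto
    note IH = Cons.IH[OF n(2)]
    have "(b # x) ! (m - 1) \<noteq> a" if "1 \<le> m" "m < n" for m
    proof (cases "m = 1")
      case True then show ?thesis using False by simp
    next
      case F: False
      then have "(b # x) ! (m - 1) = x ! (m - 1 - 1)" "1 \<le> m - 1" "m - 1 < n'"
        using that n by (auto simp: nth_Cons')
      then show ?thesis using IH by auto
    qed
    moreover have "(b # x) ! (n - 1) = a" using IH n by (auto simp: nth_Cons')
    ultimately show ?thesis using IH n by auto
  qed
qed simp

lemma lend_N: "lend [a] x = None \<Longrightarrow> a \<notin> set x"
  by (induction x) (auto split: if_splits)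

lemma next_pos_lend: "next_pos w a q = map_option ((+) q) (lend [a] (drop q w))"
proof (cases "lend [a] (drop q w)")
  case None
  have "\<not> (\<exists>p. q < p \<and> is_pos w a p)"
  proof
    assume "\<exists>p. q < p \<and> is_pos w a p"
    then obtain p where p: "q < p" "is_pos w a p" by blast
    then have "drop q w ! (p - 1 - q) = a" "p - 1 - q < length (drop q w)"
      by (auto simp: is_pos_def)
    then have "a \<in> set (drop q w)" by (metis nth_mem)
    with lend_N[OF None] show False by simp
  qed
  then show ?thesis using None by (simp add: next_pos_def)
next
  case (Some n)
  note S = lend_S[OF Some]
  have P: "q < q + n \<and> is_pos w a (q + n)"
    using S by (auto simp: is_pos_def)
  have "(LEAST p. q < p \<and> is_pos w a p) = q + n"
  proof (rule Least_equality)
    show "q < q + n \<and> is_pos w a (q + n)" by (rule P)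
    fix p assume p: "q < p \<and> is_pos w a p"
    show "q + n \<le> p"
    proof (rule ccontr)
      assume "\<not> q + n \<le> p"
      then have "1 \<le> p - q" "p - q < n" using p by auto
      with S have "drop q w ! (p - q - 1) \<noteq> a" by blast
      moreover have "drop q w ! (p - q - 1) = w ! (p - 1)" using p
        by (auto simp: is_pos_def)
      ultimately show False using p by (auto simp: is_pos_def)
    qed
  qed
  moreover have "\<exists>p. q < p \<and> is_pos w a p" using P by blast
  ultimately show ?thesis using Some by (simp add: next_pos_def)
qed

lemma prev_pos_lend:
  assumes "1 \<le> q" "q \<le> length w + 1"
  shows "prev_pos w a q = map_option (\<lambda>n. q - n) (lend [a] (rev (take (q - 1) w)))"
proof -
  define y where "y = take (q - 1) w"
  have ly: "length y = q - 1" using assms by (simp add: y_def)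
  have yn: "y ! m = w ! m" if "m < q - 1" for m using that by (simp add: y_def)
  have ry: "rev y ! (n - 1) = w ! (q - n - 1)" if "1 \<le> n" "n \<le> q - 1" for n
    using that ly yn by (simp add: rev_nth)
  show ?thesis
  proof (cases "lend [a] (rev y)")
    case None
    have "\<not> (\<exists>p. p < q \<and> is_pos w a p)"
    proof
      assume "\<exists>p. p < q \<and> is_pos w a p"
      then obtain p where p: "p < q" "is_pos w a p" by blast
      then have "y ! (p - 1) = a" "p - 1 < length y" using yn ly
        by (auto simp: is_pos_def)
      then have "a \<in> set y" by (metis nth_mem)
      with lend_N[OF None] show False by simp
    qed
    then show ?thesis using None by (simp add: prev_pos_def y_def)
  next
    case (Some n)
    note S = lend_S[OF Some]
    have P: "q - n < q \<and> is_pos w a (q - n)"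
      using S ly ry[of n] assms by (auto simp: is_pos_def)
    have "(GREATEST p. p < q \<and> is_pos w a p) = q - n"
    proof (rule Greatest_equality)
      show "q - n < q \<and> is_pos w a (q - n)" by (rule P)
      fix p assume p: "p < q \<and> is_pos w a p"
      show "p \<le> q - n"
      proof (rule ccontr)
        assume "\<not> p \<le> q - n"
        then have "1 \<le> q - p" "q - p < n" using p by auto
        with S ly have "rev y ! (q - p - 1) \<noteq> a" by auto
        moreover have "rev y ! (q - p - 1) = w ! (p - 1)" using ry[of "q - p"] p S ly \<open>q - p < n\<close>
          by (auto simp: is_pos_def)
        ultimately show False using p by (auto simp: is_pos_def)
      qed
    qed
    moreover have "\<exists>p. p < q \<and> is_pos w a p" using P by blast
  ultimately show ?thesis using Some by (simp add: prev_pos_def y_def)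
  qed
qed

lemma xev_lend: "xev w q r = map_option ((+) q) (lend r (drop q w))"
proof (induction r arbitrary: q)
  case Nil then show ?case by simp
next
  case (Cons a r)
  have "lend (a # r) (drop q w) = lend ([a] @ r) (drop q w)" by simp
  also have "\<dots> = (case lend [a] (drop q w) of None \<Rightarrow> None
      | Some n \<Rightarrow> map_option ((+) n) (lend r (drop n (drop q w))))"
    by (rule lend_append)
  finally show ?case using Cons
    apply (auto simp: next_pos_lend option.map_comp comp_def add.assoc split: option.splits)
    subgoal for n by (cases "lend r (drop (q + n) w)") (simp_all add: add.commute[of n q] add.assoc)
    done
qed

lemma xrank_lend: "xrank w r = lend r w"
  by (simp add: xrank_def xev_lend map_option_plus0)

lemma yev_lend: "1 \<le> q \<Longrightarrow> q \<le> length w + 1 \<Longrightarrow>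
   yev w q t = map_option (\<lambda>n. q - n) (lend t (rev (take (q - 1) w)))"
proof (induction t arbitrary: q)
  case Nil then show ?case by simp
next
  case (Cons a t)
  define Y where "Y = rev (take (q - 1) w)"
  have lY: "length Y = q - 1" using Cons.prems by (simp add: Y_def)
  have "lend (a # t) Y = lend ([a] @ t) Y" by simp
  also have "\<dots> = (case lend [a] Y of None \<Rightarrow> None
      | Some n \<Rightarrow> map_option ((+) n) (lend t (drop n Y)))"
    by (rule lend_append)
  finally have E: "lend (a # t) Y = (case lend [a] Y of None \<Rightarrow> None
      | Some n \<Rightarrow> map_option ((+) n) (lend t (drop n Y)))" .
  show ?case
  proof (cases "lend [a] Y")
    case None
    then show ?thesis using E prev_pos_lend[OF Cons.prems, of a] by (simp add: Y_def)
  next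
    case (Some n)
    note S = lend_S[OF Some]
    have n: "1 \<le> n" "n \<le> q - 1" using S lY by auto
    have pp: "prev_pos w a q = Some (q - n)" using prev_pos_lend[OF Cons.prems, of a] Some
      by (simp add: Y_def)
    have lt: "length (take (q - 1) w) = q - 1" using Cons.prems by simp
    have d: "drop n Y = rev (take (q - n - 1) w)"
      unfolding Y_def drop_rev lt using n by (simp add: min_def)
    have IH: "yev w (q - n) t = map_option (\<lambda>m. (q - n) - m) (lend t (rev (take (q - n - 1) w)))"
      using Cons.IH[of "q - n"] Cons.prems n by auto
    have "yev w q (a # t) = yev w (q - n) t" using pp by simp
    also have "\<dots> = map_option (\<lambda>m. (q - n) - m) (lend t (rev (take (q - n - 1) w)))" by (rule IH)
    also have "\<dots> = map_option (\<lambda>m. q - m) (lend (a # t) Y)"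
      using E Some d by (cases "lend t (rev (take (q - n - 1) w))") simp_all
    finally show ?thesis by (simp add: Y_def)
  qed
qed

lemma yrank_lend: "yrank w t = map_option (\<lambda>n. length w + 1 - n) (lend t (rev w))"
  by (simp add: yrank_def yev_lend)



lemma subseq_rev: "subseq xs ys \<Longrightarrow> subseq (rev xs) (rev ys)"
  by (induction rule: list_emb.induct) (auto intro: subseq_rev_drop_many list_emb_append_mono)

lemma take_subseq_mono: "m \<le> n \<Longrightarrow> subseq (take m xs) (take n xs)"
proof -
  assume "m \<le> n"
  then have "take m xs = take m (take n xs)" by (simp add: min_def)
  then show ?thesis by (metis prefix_imp_subseq take_is_prefix)
qed

lemma drop_subseq_mono: "m \<le> n \<Longrightarrow> subseq (drop n xs) (drop m xs)"
proof -
  assume "m \<le> n"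
  then have "drop n xs = drop (n - m) (drop m xs)" by simp
  then show ?thesis by (metis suffix_imp_subseq suffix_drop)
qed

lemma subseq_take: "subseq (take n xs) xs"
  by (metis prefix_imp_subseq take_is_prefix)

lemma subseq_split: "subseq (xs @ ys) zs \<Longrightarrow> \<exists>m. subseq xs (take m zs) \<and> subseq ys (drop m zs)"
proof -
  assume "subseq (xs @ ys) zs"
  then obtain us vs where "zs = us @ vs" "subseq xs us" "subseq ys vs"
    using list_emb_appendD by blast
  then show ?thesis by (intro exI[of _ "length us"]) simp
qed

lemma lend_L5: "subseq r (take p x) \<Longrightarrow> \<not> subseq r (take (p - 1) x) \<Longrightarrow> lend r x = Some p"
proof -
  assume a: "subseq r (take p x)" "\<not> subseq r (take (p - 1) x)"
  have "subseq r x" using a(1) subseq_take subseq_order.order_trans by blast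
  then obtain n where n: "lend r x = Some n" using lend_L3 by blast
  have "n \<le> p" using lend_L2[OF n a(1)] .
  moreover have "\<not> n \<le> p - 1"
  proof
    assume "n \<le> p - 1"
    then have "subseq r (take (p - 1) x)"
      using lend_L1[OF n] take_subseq_mono subseq_order.order_trans by blast
    with a(2) show False by simp
  qed
  ultimately show ?thesis using n by simp
qed

lemma exists_ranker: "1 \<le> p \<Longrightarrow> p \<le> length x \<Longrightarrow> \<exists>r. r \<noteq> [] \<and> lend r x = Some p"
proof -
  assume p: "1 \<le> p" "p \<le> length x"
  define a where "a = x ! (p - 1)"
  have tp: "take p x = take (p - 1) x @ [a]"
    using p by (metis a_def Suc_diff_le diff_Suc_1 diff_less less_le_trans nat_le_linear not_one_le_zero
      take_Suc_conv_app_nth zero_less_one Suc_le_eq)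
  define r where "r = filter (\<lambda>c. c = a) (take (p - 1) x) @ [a]"
  have "subseq r (take p x)" unfolding r_def tp by (simp add: list_emb_append_mono)
  moreover have "\<not> subseq r (take (p - 1) x)"
  proof
    assume "subseq r (take (p - 1) x)"
    then have "subseq (filter (\<lambda>c. c = a) r) (filter (\<lambda>c. c = a) (take (p - 1) x))" by simp
    then have "length (filter (\<lambda>c. c = a) r) \<le> length (filter (\<lambda>c. c = a) (take (p - 1) x))"
      by (rule list_emb_length)
    then show False by (simp add: r_def)
  qed
  ultimately show ?thesis using lend_L5 r_def by blast
qed

lemma canS_Suc_sub: "canS u p (Suc d) \<subseteq> canS u p d"
  by (auto simp: Let_def)

declare canS.simps(2)[simp del]

lemma canS_sub0: "canS u p d \<subseteq> canS u p 0"
  by (induction d) (use canS_Suc_sub in blast)+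

lemma canS0_iff: "r \<in> canS u p 0 \<longleftrightarrow> r \<noteq> [] \<and> length r = xattr u p \<and> lend r u = Some p"
  by (simp add: xrank_lend)

lemma canS_ne:
  assumes "1 \<le> p" "p \<le> length u"
  shows "canS u p d \<noteq> {}"
proof (induction d)
  case 0
  obtain r where "r \<noteq> [] \<and> lend r u = Some p" using exists_ranker[OF assms] by blast
  then have ex: "\<exists>m r. r \<noteq> [] \<and> length r = m \<and> xrank u r = Some p" by (auto simp: xrank_lend)
  have "\<exists>r. r \<noteq> [] \<and> length r = xattr u p \<and> xrank u r = Some p"
    unfolding xattr_def by (rule LeastI_ex[OF ex])
  then show ?case by auto
next
  case (Suc d)
  define t where "t = xattr u p - Suc d"
  define Q where "Q = {q. \<exists>r \<in> canS u p d. xrank u (take t r) = Some q}"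
  have fin: "finite Q"
  proof (rule finite_subset[of _ "{..length u}"])
    show "Q \<subseteq> {..length u}"
      using lend_L1 by (auto simp: Q_def xrank_lend)
  qed simp
  obtain r where r: "r \<in> canS u p d" using Suc by blast
  then have "lend r u = Some p" using canS_sub0 by (auto simp: xrank_lend)
  then have "subseq r u" using lend_L1 subseq_take subseq_order.order_trans by blast
  then have "subseq (take t r) u" using subseq_take subseq_order.order_trans by blast
  then obtain q where "lend (take t r) u = Some q" using lend_L3 by blast
  then have "Q \<noteq> {}" using r by (auto simp: Q_def xrank_lend)
  then have "Min Q \<in> Q" using fin by simp
  then obtain r' where "r' \<in> canS u p d" "xrank u (take t r') = Some (Min Q)" by (auto simp: Q_def)
  then have "r' \<in> canS u p (Suc d)" by (simp add: Let_def t_def Q_def canS.simps(2))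
  then show ?case by blast
qed

lemma canS_agree:
  "r1 \<in> canS u p d \<Longrightarrow> r2 \<in> canS u p d \<Longrightarrow> xattr u p - d \<le> t \<Longrightarrow>
    xrank u (take t r1) = xrank u (take t r2)"
proof (induction d arbitrary: t)
  case 0
  then show ?case by simp
next
  case (Suc d)
  have m: "r1 \<in> canS u p d" "r2 \<in> canS u p d" using Suc.prems canS_Suc_sub by blast+
  show ?case
  proof (cases "xattr u p - d \<le> t")
    case True then show ?thesis using Suc.IH m by blast
  next
    case False
    then have "t = xattr u p - Suc d" using Suc.prems by simp
    then show ?thesis using Suc.prems(1,2) by (simp add: Let_def canS.simps(2))
  qed
qed

lemma last_take_Suc: "n < length r \<Longrightarrow> last (take (Suc n) r) = r ! n"
  by (simp add: take_Suc_conv_app_nth)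

lemma canS_unique:
  assumes "r1 \<in> canS u p (xattr u p - 1)" "r2 \<in> canS u p (xattr u p - 1)"
  shows "r1 = r2"
proof -
  have m0: "r1 \<in> canS u p 0" "r2 \<in> canS u p 0" using assms canS_sub0 by blast+
  then have l: "length r1 = xattr u p" "length r2 = xattr u p" "lend r1 u = Some p"
    unfolding canS0_iff by blast+
  show ?thesis
  proof (rule nth_equalityI)
    show "length r1 = length r2" using l by simp
    fix n assume n: "n < length r1"
    have e: "xrank u (take (Suc n) r1) = xrank u (take (Suc n) r2)"
      by (rule canS_agree[OF assms]) simp
    have "subseq r1 u" using lend_L1[OF l(3)] subseq_take subseq_order.order_trans by blast
    then have "subseq (take (Suc n) r1) u" using subseq_take subseq_order.order_trans by blast
    then obtain q where q: "lend (take (Suc n) r1) u = Some q" using lend_L3 by blast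
    then have q2: "lend (take (Suc n) r2) u = Some q" using e by (simp add: xrank_lend)
    have ne1: "take (Suc n) r1 \<noteq> []" using n by (cases r1) auto
    have ne2: "take (Suc n) r2 \<noteq> []" using n l by (cases r2) auto
    have "u ! (q - 1) = last (take (Suc n) r1)" using lend_L4[OF q ne1] by simp
    moreover have "u ! (q - 1) = last (take (Suc n) r2)" using lend_L4[OF q2 ne2] by simp
    moreover have "last (take (Suc n) r1) = r1 ! n" using n by (rule last_take_Suc)
    moreover have "last (take (Suc n) r2) = r2 ! n" using n l by (intro last_take_Suc) simp
    ultimately show "r1 ! n = r2 ! n" by simp
  qed
qed

lemma canon_mem:
  assumes "1 \<le> p" "p \<le> length u"
  shows "canon u p \<in> canS u p (xattr u p - 1)"
proof -
  obtain r where r: "r \<in> canS u p (xattr u p - 1)" using canS_ne[OF assms] by blast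
  have "\<exists>!r. r \<in> canS u p (xattr u p - 1)" using r canS_unique by blast
  then show ?thesis unfolding canon_def by (rule theI')
qed

lemma canon_R:
  assumes "1 \<le> p" "p \<le> length u"
  shows "canon u p \<noteq> [] \<and> length (canon u p) = xattr u p \<and> lend (canon u p) u = Some p"
  using canon_mem[OF assms] canS_sub0 canS0_iff by blast




lemma canS_shift:
  assumes xj: "xattr u j = Suc (xattr u i)"
    and F1: "\<And>s. s \<in> canS u j 0 \<Longrightarrow> s = take (xattr u i) s @ [a] \<and>
                 (\<exists>q. lend (take (xattr u i) s) u = Some q \<and> i \<le> q)"
    and F2: "\<And>r. r \<in> canS u i 0 \<Longrightarrow> r @ [a] \<in> canS u j 0"
    and ne: "canS u i 0 \<noteq> {}"
  shows "canS u j (Suc d) = (\<lambda>r. r @ [a]) ` canS u i d"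
proof (induction d)
  case 0
  define Q where "Q = {q. \<exists>s \<in> canS u j 0. xrank u (take (xattr u i) s) = Some q}"
  have fin: "finite Q"
  proof (rule finite_subset[of _ "{..length u}"])
    show "Q \<subseteq> {..length u}"
      using lend_L1 by (auto simp: Q_def xrank_lend)
  qed simp
  have lb: "\<forall>q\<in>Q. i \<le> q" using F1 by (fastforce simp: Q_def xrank_lend)
  obtain r0 where r0: "r0 \<in> canS u i 0" using ne by blast
  have "xrank u (take (xattr u i) (r0 @ [a])) = Some i" using r0 by (simp add: xrank_lend)
  then have "i \<in> Q" using F2[OF r0] unfolding Q_def by blast
  then have MQ: "Min Q = i" using fin lb by (intro Min_eqI) auto
  have xi1: "1 \<le> xattr u i" using r0 by (cases r0) auto
  have "canS u j 1 = {s \<in> canS u j 0. xrank u (take (xattr u i) s) = Some i}"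
    using MQ xj by (simp add: Let_def Q_def canS.simps(2))
  also have "\<dots> = (\<lambda>r. r @ [a]) ` canS u i 0"
  proof (intro set_eqI iffI)
    fix s assume s: "s \<in> {s \<in> canS u j 0. xrank u (take (xattr u i) s) = Some i}"
    then have "s = take (xattr u i) s @ [a]" using F1 by blast
    moreover have "take (xattr u i) s \<in> canS u i 0"
      using s xj xi1 by (auto simp: xrank_lend)
    ultimately show "s \<in> (\<lambda>r. r @ [a]) ` canS u i 0" by blast
  next
    fix s assume "s \<in> (\<lambda>r. r @ [a]) ` canS u i 0"
    then obtain r where r: "r \<in> canS u i 0" "s = r @ [a]" by blast
    then show "s \<in> {s \<in> canS u j 0. xrank u (take (xattr u i) s) = Some i}"
      using F2[OF r(1)] by auto
  qed
  finally show ?case by simp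
next
  case (Suc d)
  define t where "t = xattr u i - Suc d"
  have tj: "xattr u j - Suc (Suc d) = t" using xj by (simp add: t_def)
  have key: "take t (r @ [a]) = take t r" if "r \<in> canS u i d" for r
  proof -
    have "length r = xattr u i" using that canS_sub0 by fastforce
    then show ?thesis by (simp add: t_def)
  qed
  have Qeq: "{q. \<exists>s \<in> canS u j (Suc d). xrank u (take t s) = Some q}
      = {q. \<exists>r \<in> canS u i d. xrank u (take t r) = Some q}"
  proof (intro set_eqI iffI)
    fix q assume "q \<in> {q. \<exists>s \<in> canS u j (Suc d). xrank u (take t s) = Some q}"
    then obtain s where s: "s \<in> canS u j (Suc d)" "xrank u (take t s) = Some q" by blast
    then obtain r where r: "r \<in> canS u i d" "s = r @ [a]" using Suc.IH by blast
    show "q \<in> {q. \<exists>r \<in> canS u i d. xrank u (take t r) = Some q}"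
      using s(2) r key[OF r(1)] by auto
  next
    fix q assume "q \<in> {q. \<exists>r \<in> canS u i d. xrank u (take t r) = Some q}"
    then obtain r where r: "r \<in> canS u i d" "xrank u (take t r) = Some q" by blast
    have "r @ [a] \<in> canS u j (Suc d)" using Suc.IH r(1) by blast
    then show "q \<in> {q. \<exists>s \<in> canS u j (Suc d). xrank u (take t s) = Some q}"
      using r(2) key[OF r(1)] by (metis (mono_tags, lifting) mem_Collect_eq)
  qed
  have "canS u j (Suc (Suc d)) = {s \<in> canS u j (Suc d). xrank u (take t s) =
      Some (Min {q. \<exists>r \<in> canS u i d. xrank u (take t r) = Some q})}"
    by (simp only: canS.simps(2)[of u j "Suc d"] Let_def tj Qeq)
  also have "\<dots> = (\<lambda>r. r @ [a]) ` {r \<in> canS u i d. xrank u (take t r) =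
      Some (Min {q. \<exists>r \<in> canS u i d. xrank u (take t r) = Some q})}"
    (is "{s \<in> _. xrank u (take t s) = Some ?M} = _")
  proof (intro set_eqI iffI)
    fix s assume "s \<in> {s \<in> canS u j (Suc d). xrank u (take t s) = Some ?M}"
    then have s: "s \<in> canS u j (Suc d)" "xrank u (take t s) = Some ?M" by blast+
    then obtain r where r: "r \<in> canS u i d" "s = r @ [a]" using Suc.IH by blast
    have "xrank u (take t r) = Some ?M" using s(2) r key[OF r(1)] by simp
    then show "s \<in> (\<lambda>r. r @ [a]) ` {r \<in> canS u i d. xrank u (take t r) = Some ?M}"
      using r by blast
  next
    fix s assume "s \<in> (\<lambda>r. r @ [a]) ` {r \<in> canS u i d. xrank u (take t r) = Some ?M}"
    then obtain r where r: "r \<in> canS u i d" "s = r @ [a]" "xrank u (take t r) = Some ?M"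
      by blast
    have "s \<in> canS u j (Suc d)" using Suc.IH r by blast
    moreover have "xrank u (take t s) = Some ?M" using r key[OF r(1)] by simp
    ultimately show "s \<in> {s \<in> canS u j (Suc d). xrank u (take t s) = Some ?M}"
      by blast
  qed
  also have "\<dots> = (\<lambda>r. r @ [a]) ` canS u i (Suc d)"
    by (simp only: canS.simps(2)[of u i d] Let_def t_def)
  finally show ?case .
qed



lemma simk_sub: "simk k u v \<Longrightarrow> length w \<le> k \<Longrightarrow> subseq w u \<Longrightarrow> subseq w v"
  unfolding simk_def by blast

lemma lend_subseq: "lend r x = Some n \<Longrightarrow> subseq r x"
  using lend_L1 subseq_take subseq_order.order_trans by blast

lemma lend_snoc:
  assumes "lend (s0 @ [a]) x = Some \<sigma>"
  shows "\<exists>\<sigma>0. lend s0 x = Some \<sigma>0 \<and> \<sigma>0 < \<sigma>"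
proof -
  have "lend (s0 @ [a]) x = (case lend s0 x of None \<Rightarrow> None
      | Some n \<Rightarrow> map_option ((+) n) (lend [a] (drop n x)))" by (rule lend_append)
  with assms have c: "(case lend s0 x of None \<Rightarrow> None
      | Some n \<Rightarrow> map_option ((+) n) (lend [a] (drop n x))) = Some \<sigma>" by simp
  then obtain \<sigma>0 where s0: "lend s0 x = Some \<sigma>0"
    "map_option ((+) \<sigma>0) (lend [a] (drop \<sigma>0 x)) = Some \<sigma>"
    by (cases "lend s0 x") auto
  then obtain n where a: "lend [a] (drop \<sigma>0 x) = Some n" "\<sigma> = \<sigma>0 + n" by auto
  have "1 \<le> n" using lend_S[OF a(1)] by blast
  then show ?thesis using a s0 by auto
qed

theorem lemma7:
  fixes k :: nat and u v :: "'a::finite list" and i j :: nat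
  assumes "1 \<le> i" and "i < j" and "j \<le> length u"
    and "u ! (i - 1) = u ! (j - 1)"
    and "\<forall>l. i < l \<and> l < j \<longrightarrow> u ! (l - 1) \<noteq> u ! (i - 1)"
    and "xattr u i + yattr u i \<le> k + 1"
    and "xattr u j \<le> k"
    and "simk k u v"
  shows "\<exists>p q. xrank v (canon u i) = Some p \<and> xrank v (canon u j) = Some q \<and> p < q"
proof -
  note h = assms
  define a where "a = u ! (i - 1)"
  define n where "n = length u"
  have ilen: "i \<le> n" "i - 1 < n" using h(2,3) h(1) by (auto simp: n_def)
  have "\<exists>t0. t0 \<noteq> [] \<and> lend t0 (rev u) = Some (n + 1 - i)"
    by (rule exists_ranker) (use h(1) ilen in \<open>auto simp: n_def\<close>)
  then obtain t0 where t0: "t0 \<noteq> []" "lend t0 (rev u) = Some (n + 1 - i)" by blast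
  have "yrank u t0 = Some i" using t0 ilen by (simp add: yrank_lend n_def)
  then have ex: "\<exists>m t. t \<noteq> [] \<and> length t = m \<and> yrank u t = Some i" using t0 by blast
  obtain t where t: "t \<noteq> []" "length t = yattr u i" "yrank u t = Some i"
    using LeastI_ex[OF ex] unfolding yattr_def by blast
  obtain nn where nn: "lend t (rev u) = Some nn" "n + 1 - nn = i"
    using t(3) by (auto simp: yrank_lend n_def)
  have nnb: "1 \<le> nn" "nn \<le> n" using lend_L1[OF nn(1)] lend_L4[OF nn(1) t(1)] by (auto simp: n_def)
  then have nni: "n - nn = i - 1" using nn(2) by auto
  have Y1: "subseq (rev t) (drop (i - 1) u)"
  proof -
    have "subseq t (take nn (rev u))" using lend_L1[OF nn(1)] by blast
    then have "subseq t (rev (drop (i - 1) u))" by (simp add: take_rev nni[unfolded n_def])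
    then show ?thesis using subseq_rev by fastforce
  qed
  have Y2: "m < i" if "subseq (rev t) (drop m u)" for m
  proof (cases "m < n")
    case False
    then have "drop m u = []" by (simp add: n_def)
    then show ?thesis using that t(1) by simp
  next
    case True
    have "subseq t (rev (drop m u))" using subseq_rev[OF that] by simp
    then have "subseq t (take (n - m) (rev u))" by (simp add: rev_drop n_def)
    then have "nn \<le> n - m" using lend_L2[OF nn(1)] by blast
    then show ?thesis using nn(2) True by auto
  qed
  have Y3: "last t = a"
  proof -
    have "rev u ! (nn - 1) = last t" using lend_L4[OF nn(1) t(1)] by blast
    moreover have "rev u ! (nn - 1) = u ! (n - nn)" using nnb by (simp add: rev_nth n_def)
    ultimately show ?thesis using nni by (simp add: a_def)
  qed
  define T' where "T' = tl (rev t)"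
  have T: "rev t = a # T'"
  proof -
    have "rev t \<noteq> []" using t(1) by simp
    then have "rev t = hd (rev t) # tl (rev t)" by simp
    then show ?thesis using Y3 by (simp add: hd_rev T'_def)
  qed
  have lT: "length t = Suc (length T')" using arg_cong[OF T, of length] by simp
  define r where "r = canon u i"
  define s where "s = canon u j"
  have R: "r \<noteq> []" "length r = xattr u i" "lend r u = Some i"
    using canon_R[of i u] h(1) ilen by (auto simp: r_def n_def)
  have S: "s \<noteq> []" "length s = xattr u j" "lend s u = Some j"
    using canon_R[of j u] h(1,2,3) by (auto simp: s_def)
  have lr: "last r = a" using lend_L4[OF R(3) R(1)] by (simp add: a_def)
  have ls: "last s = a" using lend_L4[OF S(3) S(1)] h(4) by (simp add: a_def)
  have yi: "1 \<le> yattr u i" using t by (cases t) auto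
  have xik: "length r \<le> k" using R(2) h(6) yi by simp
  have xjk: "length s \<le> k" using S(2) h(7) by simp
  have np: "next_pos u a i = Some j"
  proof -
    have P: "i < j \<and> is_pos u a j" using h(1-4) by (auto simp: is_pos_def a_def)
    have "(LEAST p. i < p \<and> is_pos u a p) = j"
    proof (rule Least_equality)
      show "i < j \<and> is_pos u a j" by (rule P)
      fix p assume p: "i < p \<and> is_pos u a p"
      show "j \<le> p"
      proof (rule ccontr)
        assume "\<not> j \<le> p"
        then show False using p h(5) by (auto simp: is_pos_def a_def)
      qed
    qed
    moreover have "\<exists>p. i < p \<and> is_pos u a p" using P by blast
    ultimately show ?thesis by (simp add: next_pos_def)
  qed
  have lra: "lend (r @ [a]) u = Some j"
  proof -
    obtain m where m: "lend [a] (drop i u) = Some m" "i + m = j"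
      using np by (auto simp: next_pos_lend)
    show ?thesis using lend_append[of r "[a]" u] R(3) m by simp
  qed
  have xj_le: "xattr u j \<le> Suc (xattr u i)"
  proof -
    have "r @ [a] \<noteq> [] \<and> length (r @ [a]) = Suc (xattr u i) \<and> xrank u (r @ [a]) = Some j"
      using R lra by (simp add: xrank_lend)
    then show ?thesis unfolding xattr_def by (intro Least_le) blast
  qed
  have "subseq r v" using simk_sub[OF h(8) xik lend_subseq[OF R(3)]] .
  then obtain p where p: "lend r v = Some p" using lend_L3 by blast
  have "subseq s v" using simk_sub[OF h(8) xjk lend_subseq[OF S(3)]] .
  then obtain \<sigma> where \<sigma>: "lend s v = Some \<sigma>" using lend_L3 by blast
  have "p < \<sigma>"
  proof (cases "xattr u j \<le> xattr u i")
    case True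
    \<comment> \<open>r @ T' is a subword of u, hence of v\<close>
    have "subseq T' (drop i u)"
    proof -
      have "drop (i - 1) u = a # drop i u"
        using Cons_nth_drop_Suc[of "i - 1" u] ilen h(1) by (simp add: a_def n_def)
      then show ?thesis using Y1 T by simp
    qed
    then have TT: "subseq T' (drop i u)" .
    have rT: "subseq r (take i u)" using lend_L1[OF R(3)] by blast
    have "subseq (r @ T') (take i u @ drop i u)" by (rule list_emb_append_mono[OF rT TT])
    then have "subseq (r @ T') u" by simp
    moreover have "length (r @ T') \<le> k"
      using R(2) h(6) t(2) lT by simp
    ultimately have "subseq (r @ T') v" using simk_sub[OF h(8)] by blast
    then obtain m where m: "subseq r (take m v)" "subseq T' (drop m v)" using subseq_split by blast
    have "p \<le> m" using lend_L2[OF p m(1)] .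
    then have "subseq T' (drop p v)" using m(2) drop_subseq_mono subseq_order.order_trans by blast
    moreover have pv: "1 \<le> p" "p \<le> length v" "v ! (p - 1) = a"
      using lend_L4[OF p R(1)] lend_L1[OF p] lr by auto
    have dv: "drop (p - 1) v = a # drop p v"
      using Cons_nth_drop_Suc[of "p - 1" v] pv by simp
    have vT: "subseq (rev t) (drop (p - 1) v)"
      unfolding T dv using \<open>subseq T' (drop p v)\<close> by simp
    define s0 where "s0 = butlast s"
    have s0: "s = s0 @ [a]" using append_butlast_last_id[OF S(1)] ls by (simp add: s0_def)
    obtain \<sigma>0 where \<sigma>0: "lend s0 v = Some \<sigma>0" "\<sigma>0 < \<sigma>" using lend_snoc \<sigma> s0 by metis
    show ?thesis
    proof (rule ccontr)
      assume "\<not> p < \<sigma>"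
      then have "\<sigma>0 \<le> p - 1" using \<sigma>0 by auto
      then have "subseq s0 (take (p - 1) v)"
        using lend_L1[OF \<sigma>0(1)] take_subseq_mono subseq_order.order_trans by blast
      then have "subseq (s0 @ rev t) (take (p - 1) v @ drop (p - 1) v)"
        using vT by (rule list_emb_append_mono)
      then have "subseq (s0 @ rev t) v" by simp
      moreover have "length (s0 @ rev t) \<le> k"
        using S(2) True h(6) t(2) arg_cong[OF s0, of length] by simp
      ultimately have "subseq (s0 @ rev t) u" using h(8) unfolding simk_def by blast
      then obtain m' where m': "subseq s0 (take m' u)" "subseq (rev t) (drop m' u)"
        using subseq_split by blast
      have "m' \<le> i - 1" using Y2[OF m'(2)] by simp
      then have "subseq s0 (take (i - 1) u)" using m'(1) take_subseq_mono subseq_order.order_trans by blast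
      then have "subseq (s0 @ [a]) (take (i - 1) u @ [a])" by simp
      moreover have "take i u = take (i - 1) u @ [a]"
        using take_Suc_conv_app_nth[of "i - 1" u] ilen h(1) by (simp add: a_def n_def)
      ultimately have "subseq s (take i u)" using s0 by simp
      then have "j \<le> i" using lend_L2[OF S(3)] by blast
      then show False using h(2) by simp
    qed
  next
    case False
    then have xj: "xattr u j = Suc (xattr u i)" using xj_le by simp
    have F1: "s' = take (xattr u i) s' @ [a] \<and> (\<exists>q. lend (take (xattr u i) s') u = Some q \<and> i \<le> q)"
      if "s' \<in> canS u j 0" for s'
    proof -
      have s': "s' \<noteq> []" "length s' = Suc (xattr u i)" "lend s' u = Some j"
        using that xj unfolding canS0_iff by auto
      have "last s' = a" using lend_L4[OF s'(3) s'(1)] h(4) by (simp add: a_def)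
      then have e: "s' = take (xattr u i) s' @ [a]"
        using s'(2) append_butlast_last_id[OF s'(1)] by (simp add: butlast_conv_take)
      then have "lend (take (xattr u i) s' @ [a]) u = Some j" using s'(3) by simp
      then obtain q m where qm: "lend (take (xattr u i) s') u = Some q"
        "lend [a] (drop q u) = Some m" "j = q + m"
        using lend_append[of "take (xattr u i) s'" "[a]" u] by (auto split: option.splits)
      have "i \<le> q"
      proof (rule ccontr)
        assume qi: "\<not> i \<le> q"
        note SS = lend_S[OF qm(2)]
        have c: "\<forall>m'. 1 \<le> m' \<longrightarrow> m' < m \<longrightarrow> drop q u ! (m' - 1) \<noteq> a" using SS by blast
        have "1 \<le> i - q" "i - q < m" using qi qm(3) h(2) by auto
        then have "drop q u ! (i - q - 1) \<noteq> a" using c by blast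
        moreover have "drop q u ! (i - q - 1) = u ! (i - 1)" using qi ilen by (simp add: n_def)
        ultimately show False by (simp add: a_def)
      qed
      then show ?thesis using e qm(1) by blast
    qed
    have F2: "r' @ [a] \<in> canS u j 0" if "r' \<in> canS u i 0" for r'
    proof -
      have r': "r' \<noteq> []" "length r' = xattr u i" "lend r' u = Some i"
        using that unfolding canS0_iff by auto
      have "lend (r' @ [a]) u = Some j"
      proof -
        obtain m where m: "lend [a] (drop i u) = Some m" "i + m = j"
          using np by (auto simp: next_pos_lend)
        show ?thesis using lend_append[of r' "[a]" u] r'(3) m by simp
      qed
      then show ?thesis using r' xj unfolding canS0_iff by simp
    qed
    have ne: "canS u i 0 \<noteq> {}" using canS_ne[of i u 0] h(1) ilen by (simp add: n_def)
    have xi1: "1 \<le> xattr u i" using R by (cases r) auto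
    have eq: "canS u j (xattr u j - 1) = (\<lambda>r. r @ [a]) ` canS u i (xattr u i - 1)"
      using canS_shift[OF xj F1 F2 ne, of "xattr u i - 1"] xj xi1 by simp
    have "r @ [a] \<in> canS u j (xattr u j - 1)"
      using eq canon_mem[of i u] h(1) ilen by (auto simp: r_def n_def)
    moreover have "s \<in> canS u j (xattr u j - 1)" using canon_mem[of j u] h(1,2,3) by (simp add: s_def)
    ultimately have "s = r @ [a]" using canS_unique by blast
    then show ?thesis using lend_snoc[of r a v \<sigma>] \<sigma> p by auto
  qed
  then show ?thesis using p \<sigma> by (simp add: xrank_lend r_def s_def)
qed


end
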